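(* For a single parity-check (SPC) product code, the erasure probability of the first decoded information bit under successive cancellation (SC) decoding is equal to the erasure probability of each information bit under Elias' decoding.
   Context: Consider an $m$-dimensional $(n,k)$ systematic single parity-check (SPC) product code, i.e., a product code whose $\ell$-th component code, $\ell=1,\dots,m$, is an $(n_\ell,n_\ell-1)$ SPC code, so that $n=\prod_{\ell}n_\ell$ and $k=\prod_\ell (n_\ell-1)$. Transmission takes place over the binary erasure channel BEC($\epsilon_{\mathrm{ch}}$). The information bits are $u_1,\dots,u_k$. Under successive cancellation (SC) decoding, the bits are decoded in the order $i=1,\dots,k$, the decision on $u_i$ being based on the channel output and on the decisions for $u_1,\dots,u_{i-1}$ (the likelihoods are computed recursively over the dimensions, as for a polar code built from kernels whose first row is $(1,0,\dots,0)$ and whose remaining rows are $(1\,|\,\text{identity})$); over the BEC the decoder outputs an erasure in case of a tie. Under Elias' decoding, the product code is decoded as a serial concatenation, component codes of the first dimension first up to the last dimension in one sweep, and the likelihood of each $u_i$ is computed without using decisions on any other information bit (so all bits are decoded in parallel); over the BEC it also outputs an erasure on ties. With genie-aided knowledge of the preceding bits, the SC erasure probability $\epsilon^{(i)}_{\boldsymbol{G}^{[m]}}$ of bit $i$ obeys $\epsilon^{(i)}_{\boldsymbol{G}^{[m]}}=\epsilon^{(j+1)}_{\boldsymbol{G}^{[m-1]}}\bigl(1-(1-\epsilon^{(j+1)}_{\boldsymbol{G}^{[m-1]}})^{n_m-t}\bigr)$ with $j=\lfloor (i-1)/k_m\rfloor$, $t=((i-1)\bmod k_m)+1$, $k_m=n_m-1$,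 starting from $\epsilon_{\mathrm{ch}}$ at dimension $0$. *)

theory Defs
  imports Complex_Main
begin

text \<open>An m-dimensional SPC product code with component lengths ns = [n_1,...,n_m].
  Code positions are index vectors x (lists) with x!l < ns!l (0-based dimension l).\<close>

definition positions :: "nat list \<Rightarrow> nat list set" where
  "positions ns = {x. length x = length ns \<and> (\<forall>l<length ns. x ! l < ns ! l)}"

definition info_positions :: "nat list \<Rightarrow> nat list set" where
  "info_positions ns = {x. length x = length ns \<and> (\<forall>l<length ns. x ! l < ns ! l - 1)}"

text \<open>Elias' decoding over the BEC, given the set S of channel-erased positions:
  after processing dimension l (0-based), a position is still erased iff it was erased
  before and some other position on its line in dimension l was erased before
  (SPC component decoding on the BEC; ties are erasures).\<close>
fun elias_erased :: "nat list \<Rightarrow> nat list set \<Rightarrow> nat \<Rightarrow> nat list set" where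
  "elias_erased ns S 0 = S"
| "elias_erased ns S (Suc l) =
     {x \<in> elias_erased ns S l. \<exists>c < ns ! l. c \<noteq> x ! l \<and> x[l := c] \<in> elias_erased ns S l}"

text \<open>Erasure probability of position x under Elias' decoding over BEC(eps):
  every position is erased independently with probability eps.\<close>
definition elias_prob :: "nat list \<Rightarrow> real \<Rightarrow> nat list \<Rightarrow> real" where
  "elias_prob ns eps x =
     (\<Sum>S\<in>Pow (positions ns).
        (if x \<in> elias_erased ns S (length ns)
         then eps ^ card S * (1 - eps) ^ (card (positions ns) - card S) else 0))"

text \<open>Genie-aided SC erasure probability of bit i (1-based), via the recursion over
  dimensions; the argument list is the reversed list of component lengths
  (so the head is n_m, the last dimension).\<close>
fun sc_rev :: "real \<Rightarrow> nat list \<Rightarrow> nat \<Rightarrow> real" where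
  "sc_rev eps [] i = eps"
| "sc_rev eps (nm # rest) i =
     (let km = nm - 1; j = (i - 1) div km; t = (i - 1) mod km + 1;
          e = sc_rev eps rest (j + 1)
      in e * (1 - (1 - e) ^ (nm - t)))"

definition sc_prob :: "nat list \<Rightarrow> real \<Rightarrow> nat \<Rightarrow> real" where
  "sc_prob ns eps i = sc_rev eps (rev ns) i"

end

theory Submission
  imports Defs
begin

definition WW :: "real \<Rightarrow> 'a set \<Rightarrow> 'a set \<Rightarrow> real" where
  "WW e P S = e ^ card S * (1 - e) ^ (card P - card S)"

definition EE :: "real \<Rightarrow> 'a set \<Rightarrow> ('a set \<Rightarrow> real) \<Rightarrow> real" where
  "EE e P g = (\<Sum>S\<in>Pow P. WW e P S * g S)"

definition dep :: "'a set \<Rightarrow> ('a set \<Rightarrow> real) \<Rightarrow> bool" where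
  "dep B g = (\<forall>S. g S = g (S \<inter> B))"

lemma pow_split:
  assumes "finite A" "finite B" "A \<inter> B = {}"
  shows "(\<Sum>S\<in>Pow (A \<union> B). F S) = (\<Sum>S1\<in>Pow A. \<Sum>S2\<in>Pow B. F (S1 \<union> S2))"
proof -
  have bij: "bij_betw (\<lambda>(S1, S2). S1 \<union> S2) (Pow A \<times> Pow B) (Pow (A \<union> B))"
  proof (rule bij_betwI')
    fix p q assume "p \<in> Pow A \<times> Pow B" "q \<in> Pow A \<times> Pow B"
    then obtain S1 S2 T1 T2 where p: "p = (S1, S2)" and q: "q = (T1, T2)"
      and s: "S1 \<subseteq> A" "S2 \<subseteq> B" "T1 \<subseteq> A" "T2 \<subseteq> B" by auto
    show "((case p of (S1, S2) \<Rightarrow> S1 \<union> S2) = (case q of (S1, S2) \<Rightarrow> S1 \<union> S2)) = (p = q)"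
    proof
      assume h: "(case p of (S1, S2) \<Rightarrow> S1 \<union> S2) = (case q of (S1, S2) \<Rightarrow> S1 \<union> S2)"
      hence "S1 \<union> S2 = T1 \<union> T2" using p q by simp
      hence "(S1 \<union> S2) \<inter> A = (T1 \<union> T2) \<inter> A" "(S1 \<union> S2) \<inter> B = (T1 \<union> T2) \<inter> B" by auto
      hence "S1 = T1" "S2 = T2" using s assms(3) by blast+
      thus "p = q" using p q by simp
    qed simp
  next
    fix p assume "p \<in> Pow A \<times> Pow B" thus "(case p of (S1, S2) \<Rightarrow> S1 \<union> S2) \<in> Pow (A \<union> B)" by auto
  next
    fix T assume "T \<in> Pow (A \<union> B)"
    thus "\<exists>p\<in>Pow A \<times> Pow B. T = (case p of (S1, S2) \<Rightarrow> S1 \<union> S2)"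
      by (intro bexI[of _ "(T \<inter> A, T \<inter> B)"]) auto
  qed
  have "(\<Sum>S\<in>Pow (A \<union> B). F S) = (\<Sum>p\<in>Pow A \<times> Pow B. F (case p of (S1, S2) \<Rightarrow> S1 \<union> S2))"
    using sum.reindex_bij_betw[OF bij, of F] by simp
  also have "\<dots> = (\<Sum>S1\<in>Pow A. \<Sum>S2\<in>Pow B. F (S1 \<union> S2))"
    by (subst sum.cartesian_product) (simp add: split_def)
  finally show ?thesis .
qed

lemma WW_split:
  assumes "finite A" "finite B" "A \<inter> B = {}" "S1 \<subseteq> A" "S2 \<subseteq> B"
  shows "WW e (A \<union> B) (S1 \<union> S2) = WW e A S1 * WW e B S2"
proof -
  have f: "finite S1" "finite S2" using assms(1,2,4,5) finite_subset by blast+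
  have d: "S1 \<inter> S2 = {}" using assms by auto
  have c1: "card (S1 \<union> S2) = card S1 + card S2" using card_Un_disjoint[OF f d] .
  have c2: "card (A \<union> B) = card A + card B" using card_Un_disjoint[OF assms(1-3)] .
  have "card S1 \<le> card A" "card S2 \<le> card B" using assms(1,2,4,5) card_mono by blast+
  hence "card A + card B - (card S1 + card S2) = (card A - card S1) + (card B - card S2)" by simp
  thus ?thesis unfolding WW_def c1 c2 by (simp add: power_add)
qed

lemma EE_mult:
  assumes "finite A" "finite B" "A \<inter> B = {}" "dep A g" "dep B h"
  shows "EE e (A \<union> B) (\<lambda>S. g S * h S) = EE e A g * EE e B h"
proof -
  have "EE e (A \<union> B) (\<lambda>S. g S * h S) =
     (\<Sum>S1\<in>Pow A. \<Sum>S2\<in>Pow B. WW e (A \<union> B) (S1 \<union> S2) * (g (S1 \<union> S2) * h (S1 \<union> S2)))"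
    unfolding EE_def by (rule pow_split[OF assms(1-3)])
  also have "\<dots> = (\<Sum>S1\<in>Pow A. \<Sum>S2\<in>Pow B. (WW e A S1 * g S1) * (WW e B S2 * h S2))"
  proof (intro sum.cong refl)
    fix S1 S2 assume s: "S1 \<in> Pow A" "S2 \<in> Pow B"
    have "(S1 \<union> S2) \<inter> A = S1" "(S1 \<union> S2) \<inter> B = S2" using s assms(3) by auto
    hence "g (S1 \<union> S2) = g S1" "h (S1 \<union> S2) = h S2" using assms(4,5) unfolding dep_def by metis+
    thus "WW e (A \<union> B) (S1 \<union> S2) * (g (S1 \<union> S2) * h (S1 \<union> S2)) = (WW e A S1 * g S1) * (WW e B S2 * h S2)"
      using WW_split[OF assms(1-3)] s by simp
  qed
  also have "\<dots> = EE e A g * EE e B h" unfolding EE_def by (simp add: sum_product)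
  finally show ?thesis .
qed

lemma pow1: "Pow {a} = {{}, {a}}" by blast

lemma dep_const: "dep B (\<lambda>_. c)" unfolding dep_def by simp

lemma dep_mono: "dep B g \<Longrightarrow> B \<subseteq> D \<Longrightarrow> dep D g"
  unfolding dep_def by (metis Int_assoc inf.absorb_iff2)

lemma dep_mult: "dep B g \<Longrightarrow> dep B h \<Longrightarrow> dep B (\<lambda>S. g S * h S)"
  unfolding dep_def by metis

lemma dep_diff: "dep B g \<Longrightarrow> dep B h \<Longrightarrow> dep B (\<lambda>S. g S - h S)"
  unfolding dep_def by metis

lemma dep_prod: "(\<And>c. c \<in> C \<Longrightarrow> dep B (G c)) \<Longrightarrow> dep B (\<lambda>S. \<Prod>c\<in>C. G c S)"
  unfolding dep_def by (metis (no_types, lifting) prod.cong)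

lemma EE_one: "finite P \<Longrightarrow> EE e P (\<lambda>_. 1) = 1"
proof (induction P rule: finite_induct)
  case empty
  thus ?case by (simp add: EE_def WW_def)
next
  case (insert a F)
  have s: "EE e {a} (\<lambda>_. 1) = 1"
    by (simp add: EE_def WW_def pow1)
  have "EE e ({a} \<union> F) (\<lambda>S. 1 * 1) = EE e {a} (\<lambda>_. 1) * EE e F (\<lambda>_. 1)"
    using insert by (intro EE_mult) (auto simp: dep_const)
  thus ?case using s insert by simp
qed

lemma EE_restrict:
  assumes "finite P" "B \<subseteq> P" "dep B g"
  shows "EE e P g = EE e B g"
proof -
  have fB: "finite B" using assms finite_subset by auto
  have "P = B \<union> (P - B)" using assms by auto
  hence "EE e P g = EE e (B \<union> (P - B)) (\<lambda>S. g S * 1)" by simp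
  also have "\<dots> = EE e B g * EE e (P - B) (\<lambda>_. 1)"
    using assms fB by (intro EE_mult) (auto simp: dep_const)
  also have "\<dots> = EE e B g" using EE_one[of "P - B" e] assms by simp
  finally show ?thesis .
qed

lemma EE_diff: "EE e P (\<lambda>S. g S - h S) = EE e P g - EE e P h"
  unfolding EE_def by (simp add: right_diff_distrib sum_subtractf)

lemma EE_prod_U:
  assumes "finite C" "\<And>c. c \<in> C \<Longrightarrow> finite (Bl c)" "\<And>c. c \<in> C \<Longrightarrow> dep (Bl c) (G c)"
    "\<And>c d. c \<in> C \<Longrightarrow> d \<in> C \<Longrightarrow> c \<noteq> d \<Longrightarrow> Bl c \<inter> Bl d = {}"
  shows "EE e (\<Union>c\<in>C. Bl c) (\<lambda>S. \<Prod>c\<in>C. G c S) = (\<Prod>c\<in>C. EE e (Bl c) (G c))"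
  using assms
proof (induction C rule: finite_induct)
  case empty
  thus ?case by (simp add: EE_def WW_def)
next
  case (insert a F)
  have "EE e (\<Union>c\<in>insert a F. Bl c) (\<lambda>S. \<Prod>c\<in>insert a F. G c S)
      = EE e (Bl a \<union> (\<Union>c\<in>F. Bl c)) (\<lambda>S. G a S * (\<Prod>c\<in>F. G c S))"
    using insert by simp
  also have "\<dots> = EE e (Bl a) (G a) * EE e (\<Union>c\<in>F. Bl c) (\<lambda>S. \<Prod>c\<in>F. G c S)"
  proof (rule EE_mult)
    show "Bl a \<inter> \<Union> (Bl ` F) = {}" using insert.prems(3) insert.hyps(2) by fastforce
    show "dep (\<Union> (Bl ` F)) (\<lambda>S. \<Prod>c\<in>F. G c S)"
      by (rule dep_prod, rule dep_mono[OF insert.prems(2)]) auto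
  qed (use insert in auto)
  also have "\<dots> = (\<Prod>c\<in>insert a F. EE e (Bl c) (G c))"
    using insert by simp
  finally show ?case .
qed

lemma EE_prod:
  assumes "finite D" "finite C" "\<And>c. c \<in> C \<Longrightarrow> Bl c \<subseteq> D" "\<And>c. c \<in> C \<Longrightarrow> dep (Bl c) (G c)"
    "\<And>c d. c \<in> C \<Longrightarrow> d \<in> C \<Longrightarrow> c \<noteq> d \<Longrightarrow> Bl c \<inter> Bl d = {}"
  shows "EE e D (\<lambda>S. \<Prod>c\<in>C. G c S) = (\<Prod>c\<in>C. EE e (Bl c) (G c))"
proof -
  have "EE e D (\<lambda>S. \<Prod>c\<in>C. G c S) = EE e (\<Union>c\<in>C. Bl c) (\<lambda>S. \<Prod>c\<in>C. G c S)"
  proof (rule EE_restrict)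
    show "dep (\<Union> (Bl ` C)) (\<lambda>S. \<Prod>c\<in>C. G c S)"
      by (rule dep_prod, rule dep_mono[OF assms(4)]) auto
  qed (use assms in auto)
  also have "\<dots> = (\<Prod>c\<in>C. EE e (Bl c) (G c))"
    using assms by (intro EE_prod_U) (auto intro: finite_subset)
  finally show ?thesis .
qed

lemma finite_positions: "finite (positions ns)"
proof -
  have "positions ns \<subseteq> {xs. set xs \<subseteq> {..<Max (insert 0 (set ns))} \<and> length xs = length ns}"
  proof
    fix x assume "x \<in> positions ns"
    hence x: "length x = length ns" "\<forall>l<length ns. x ! l < ns ! l" by (auto simp: positions_def)
    have "set x \<subseteq> {..<Max (insert 0 (set ns))}"
    proof
      fix v assume "v \<in> set x"
      then obtain l where l: "l < length x" "x ! l = v" by (auto simp: in_set_conv_nth)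
      hence "v < ns ! l" using x by auto
      also have "ns ! l \<le> Max (insert 0 (set ns))" using l x by (intro Max_ge) auto
      finally show "v \<in> {..<Max (insert 0 (set ns))}" by simp
    qed
    thus "x \<in> {xs. set xs \<subseteq> {..<Max (insert 0 (set ns))} \<and> length xs = length ns}" using x by simp
  qed
  thus ?thesis by (rule finite_subset) (rule finite_lists_length_eq, simp)
qed

definition slice :: "nat list \<Rightarrow> nat list \<Rightarrow> nat \<Rightarrow> nat list set" where
  "slice ns y l = {z \<in> positions ns. \<forall>j. l \<le> j \<and> j < length ns \<longrightarrow> z ! j = y ! j}"

definition ind :: "nat list \<Rightarrow> nat \<Rightarrow> nat list \<Rightarrow> nat list set \<Rightarrow> real" where
  "ind ns l y S = (if y \<in> elias_erased ns S l then 1 else 0)"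

definition fseq :: "nat list \<Rightarrow> real \<Rightarrow> nat \<Rightarrow> real" where
  "fseq ns e l = sc_prob (take l ns) e 1"

lemma fseq_0: "fseq ns e 0 = e"
  by (simp add: fseq_def sc_prob_def)

lemma fseq_Suc: "l < length ns \<Longrightarrow>
   fseq ns e (Suc l) = fseq ns e l * (1 - (1 - fseq ns e l) ^ (ns ! l - 1))"
  by (simp add: fseq_def sc_prob_def take_Suc_conv_app_nth Let_def)

lemma ind_Suc:
  "ind ns (Suc l) y S = ind ns l y S *
     (1 - (\<Prod>c\<in>{c. c < ns ! l \<and> c \<noteq> y ! l}. (1 - ind ns l (y[l := c]) S)))"
proof -
  let ?C = "{c. c < ns ! l \<and> c \<noteq> y ! l}"
  have fC: "finite ?C" by simp
  show ?thesis
  proof (cases "\<exists>c\<in>?C. y[l := c] \<in> elias_erased ns S l")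
    case True
    then obtain c where "c \<in> ?C" "ind ns l (y[l := c]) S = 1" by (auto simp: ind_def)
    hence "(\<Prod>c\<in>?C. (1 - ind ns l (y[l := c]) S)) = 0"
      using fC by (subst prod_zero_iff) auto
    thus ?thesis using True by (auto simp: ind_def)
  next
    case False
    hence "(\<Prod>c\<in>?C. (1 - ind ns l (y[l := c]) S)) = 1"
      by (intro prod.neutral) (auto simp: ind_def)
    thus ?thesis using False by (auto simp: ind_def)
  qed
qed

lemma main:
  assumes "l \<le> length ns"
  shows "\<forall>y\<in>positions ns. dep (slice ns y l) (ind ns l y) \<and>
            EE e (slice ns y l) (ind ns l y) = fseq ns e l"
  using assms
proof (induction l)
  case 0
  show ?case
  proof
    fix y assume y: "y \<in> positions ns"
    have sl: "slice ns y 0 = {y}"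
    proof
      show "slice ns y 0 \<subseteq> {y}"
      proof
        fix z assume "z \<in> slice ns y 0"
        hence "z = y" using y by (auto simp: slice_def positions_def intro: nth_equalityI)
        thus "z \<in> {y}" by simp
      qed
      show "{y} \<subseteq> slice ns y 0" using y by (auto simp: slice_def)
    qed
    have d: "dep {y} (ind ns 0 y)" by (auto simp: dep_def ind_def)
    have "EE e {y} (ind ns 0 y) = e"
      by (simp add: EE_def WW_def pow1 ind_def)
    thus "dep (slice ns y 0) (ind ns 0 y) \<and> EE e (slice ns y 0) (ind ns 0 y) = fseq ns e 0"
      using d sl by (simp add: fseq_0)
  qed
next
  case (Suc l)
  hence IH: "\<forall>y\<in>positions ns. dep (slice ns y l) (ind ns l y) \<and>
            EE e (slice ns y l) (ind ns l y) = fseq ns e l" by simp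
  have lm: "l < length ns" using Suc.prems by simp
  let ?f = "fseq ns e l"
  let ?n = "ns ! l"
  show ?case
  proof
    fix y assume y: "y \<in> positions ns"
    let ?C = "{c. c < ?n \<and> c \<noteq> y ! l}"
    let ?D = "slice ns y (Suc l)"
    let ?Bl = "\<lambda>c. slice ns (y[l := c]) l"
    have ly: "length y = length ns" using y by (simp add: positions_def)
    have yl: "y ! l < ?n" using y lm by (simp add: positions_def)
    have yc: "\<And>c. c < ?n \<Longrightarrow> y[l := c] \<in> positions ns"
      using y lm by (auto simp: positions_def nth_list_update)
    have sub: "\<And>c. ?Bl c \<subseteq> ?D"
      using ly by (auto simp: slice_def nth_list_update)
    have disj: "\<And>c d. c \<noteq> d \<Longrightarrow> ?Bl c \<inter> ?Bl d = {}"
      using ly lm by (auto simp: slice_def)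
    have fD: "finite ?D" by (rule finite_subset[OF _ finite_positions[of ns]]) (auto simp: slice_def)
    have yy: "y[l := y ! l] = y" by simp
    have depc: "\<And>c. c < ?n \<Longrightarrow> dep ?D (ind ns l (y[l := c]))"
      using IH yc sub dep_mono by blast
    have depy: "dep ?D (ind ns l y)" using depc[OF yl] yy by simp
    have eqf: "(\<lambda>S. ind ns (Suc l) y S) = (\<lambda>S. ind ns l y S -
        (\<Prod>c\<in>{..<?n}. (if c = y ! l then ind ns l y S else 1 - ind ns l (y[l := c]) S)))"
    proof
      fix S
      have "{..<?n} = insert (y ! l) ?C" using yl by auto
      hence "(\<Prod>c\<in>{..<?n}. (if c = y ! l then ind ns l y S else 1 - ind ns l (y[l := c]) S))
          = ind ns l y S * (\<Prod>c\<in>?C. (1 - ind ns l (y[l := c]) S))"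
        by (simp add: prod.insert_if)
      thus "ind ns (Suc l) y S = ind ns l y S -
        (\<Prod>c\<in>{..<?n}. (if c = y ! l then ind ns l y S else 1 - ind ns l (y[l := c]) S))"
        by (simp add: ind_Suc right_diff_distrib)
    qed
    let ?G = "\<lambda>c S. (if c = y ! l then ind ns l y S else 1 - ind ns l (y[l := c]) S)"
    have depG: "\<And>c. c \<in> {..<?n} \<Longrightarrow> dep (?Bl c) (?G c)"
    proof -
      fix c assume c: "c \<in> {..<?n}"
      have "dep (?Bl c) (ind ns l (y[l := c]))" using IH yc c by auto
      thus "dep (?Bl c) (?G c)"
        by (cases "c = y ! l") (auto simp: dep_def)
    qed
    have depS: "dep ?D (ind ns (Suc l) y)"
      unfolding eqf
      by (intro dep_diff depy dep_prod) (auto intro: dep_mono[OF depG sub])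
    have EG: "\<And>c. c \<in> {..<?n} \<Longrightarrow> EE e (?Bl c) (?G c) = (if c = y ! l then ?f else 1 - ?f)"
    proof -
      fix c assume c: "c \<in> {..<?n}"
      have h: "EE e (?Bl c) (ind ns l (y[l := c])) = ?f" using IH yc c by auto
      have fB: "finite (?Bl c)" using fD sub finite_subset by blast
      show "EE e (?Bl c) (?G c) = (if c = y ! l then ?f else 1 - ?f)"
      proof (cases "c = y ! l")
        case True thus ?thesis using h by simp
      next
        case False
        have "EE e (?Bl c) (?G c) = EE e (?Bl c) (\<lambda>S. 1 - ind ns l (y[l := c]) S)"
          using False by simp
        also have "\<dots> = 1 - ?f" by (simp add: EE_diff EE_one[OF fB] h)
        finally show ?thesis using False by simp
      qed
    qed
    have "EE e ?D (\<lambda>S. \<Prod>c\<in>{..<?n}. ?G c S) = (\<Prod>c\<in>{..<?n}. EE e (?Bl c) (?G c))"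
      by (rule EE_prod[OF fD]) (use sub depG disj in auto)
    also have "\<dots> = (\<Prod>c\<in>{..<?n}. (if c = y ! l then ?f else 1 - ?f))"
      using EG by (intro prod.cong) auto
    also have "\<dots> = ?f * (1 - ?f) ^ (?n - 1)"
    proof -
      have "{..<?n} = insert (y ! l) ?C" using yl by auto
      moreover have "card ?C = ?n - 1"
      proof -
        have "?C = {..<?n} - {y ! l}" by auto
        thus ?thesis using yl by simp
      qed
      ultimately show ?thesis
        by (simp add: prod.insert_if)
    qed
    finally have P: "EE e ?D (\<lambda>S. \<Prod>c\<in>{..<?n}. ?G c S) = ?f * (1 - ?f) ^ (?n - 1)" .
    have A: "EE e ?D (ind ns l y) = ?f"
    proof -
      have "EE e ?D (ind ns l y) = EE e (?Bl (y ! l)) (ind ns l y)"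
        using EE_restrict[OF fD sub[of "y ! l"]] IH y yy by auto
      thus ?thesis using IH y yy by auto
    qed
    have "EE e ?D (ind ns (Suc l) y) = ?f - ?f * (1 - ?f) ^ (?n - 1)"
      using eqf EE_diff[of e ?D "ind ns l y" "\<lambda>S. \<Prod>c\<in>{..<?n}. ?G c S"] A P
      by (metis (no_types, lifting))
    also have "\<dots> = fseq ns e (Suc l)" using fseq_Suc[OF lm] by (simp add: right_diff_distrib)
    finally show "dep ?D (ind ns (Suc l) y) \<and> EE e ?D (ind ns (Suc l) y) = fseq ns e (Suc l)"
      using depS by simp
  qed
qed

theorem lemma3:
  fixes ns :: "nat list" and eps :: real and x :: "nat list"
  assumes "\<forall>n\<in>set ns. 2 \<le> n"
    and "0 \<le> eps" and "eps \<le> 1"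
    and "x \<in> info_positions ns"
  shows "sc_prob ns eps 1 = elias_prob ns eps x"
proof -
  have x: "x \<in> positions ns" using assms(4)
    by (auto simp: info_positions_def positions_def)
  have sl: "slice ns x (length ns) = positions ns" by (auto simp: slice_def)
  have "EE eps (positions ns) (ind ns (length ns) x) = fseq ns eps (length ns)"
    using main[of "length ns" ns eps] x sl by auto
  moreover have "EE eps (positions ns) (ind ns (length ns) x) = elias_prob ns eps x"
    unfolding EE_def elias_prob_def ind_def WW_def by (intro sum.cong) auto
  moreover have "fseq ns eps (length ns) = sc_prob ns eps 1" by (simp add: fseq_def)
  ultimately show ?thesis by simp
qed

end
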